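(* Let $(L,\wedge,\vee,0,1)$ be a bounded lattice. Then its multiplicative Nakano mosaic $(L,\boxdot,1)$, where $x\boxdot y:=\{z\in L\mid x\wedge y=x\wedge z=z\wedge y\}$, is an L-mosaic (with neutral element $1$ playing the role of $0$ in the definition).
   Context: For a multioperation $\boxdot:A\times A\to\wp(A)$ and subsets $X,Y$, $X\boxdot Y:=\bigcup_{x\in X,y\in Y}x\boxdot y$. A commutative mosaic $(A,\boxdot,e)$: $x\boxdot y=y\boxdot x$, $e\boxdot x=\{x\}$ for all $x$, and for some endofunction $\rho$, $z\in x\boxdot y$ implies $x\in z\boxdot\rho(y)$ and $y\in\rho(x)\boxdot z$. An L-mosaic is a commutative mosaic $(A,\boxdot,e)$ such that: (Lms1) $e,x\in x\boxdot x$ for all $x$; (Lms2) $(x\boxdot x)\boxdot(x\boxdot x)=x\boxdot x$; (Lms3) $(x\boxdot(x\boxdot y))\cap((x\boxdot y)\boxdot y)\subseteq x\boxdot y$; (Lms4) for all $x,y$ there is a unique $z\in x\boxdot y$ with $x,y\in z\boxdot z$. *)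

theory Defs
  imports Main
begin

text \<open>A multioperation on the carrier type 'a is a function 'a => 'a => 'a set.
  The carrier of the mosaic is the whole type UNIV.\<close>

definition set_mult :: "('a \<Rightarrow> 'a \<Rightarrow> 'a set) \<Rightarrow> 'a set \<Rightarrow> 'a set \<Rightarrow> 'a set" where
  "set_mult M X Y = (\<Union>x\<in>X. \<Union>y\<in>Y. M x y)"

definition comm_mosaic :: "('a \<Rightarrow> 'a \<Rightarrow> 'a set) \<Rightarrow> 'a \<Rightarrow> bool" where
  "comm_mosaic M e \<longleftrightarrow>
     (\<forall>x y. M x y = M y x) \<and>
     (\<forall>x. M e x = {x}) \<and>
     (\<exists>\<rho> :: 'a \<Rightarrow> 'a. \<forall>x y z. z \<in> M x y \<longrightarrow> x \<in> M z (\<rho> y) \<and> y \<in> M (\<rho> x) z)"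

definition L_mosaic :: "('a \<Rightarrow> 'a \<Rightarrow> 'a set) \<Rightarrow> 'a \<Rightarrow> bool" where
  "L_mosaic M e \<longleftrightarrow>
     comm_mosaic M e \<and>
     (\<forall>x. e \<in> M x x \<and> x \<in> M x x) \<and>
     (\<forall>x. set_mult M (M x x) (M x x) = M x x) \<and>
     (\<forall>x y. set_mult M {x} (M x y) \<inter> set_mult M (M x y) {y} \<subseteq> M x y) \<and>
     (\<forall>x y. \<exists>!z. z \<in> M x y \<and> x \<in> M z z \<and> y \<in> M z z)"

definition nakano_mult :: "'a::bounded_lattice \<Rightarrow> 'a \<Rightarrow> 'a set" where
  "nakano_mult x y = {z. inf x y = inf x z \<and> inf x z = inf z y}"

end

theory Submission
  imports Defs
begin

lemma nm_iff: "z \<in> nakano_mult x y \<longleftrightarrow> inf x y = inf x z \<and> inf x z = inf z y"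
  by (simp add: nakano_mult_def)

lemma nm_diag: "nakano_mult x x = {z. x \<le> z}"
  by (auto simp: nakano_mult_def inf.absorb_iff1 inf_commute)

theorem mainTheorem9:
  shows "L_mosaic (nakano_mult :: 'a::bounded_lattice \<Rightarrow> 'a \<Rightarrow> 'a set) top"
proof -
  let ?M = "nakano_mult :: 'a \<Rightarrow> 'a \<Rightarrow> 'a set"
  have c1: "\<forall>x y. ?M x y = ?M y x"
    by (auto simp: nakano_mult_def inf_commute)
  have c2: "\<forall>x. ?M top x = {x}"
    by (auto simp: nakano_mult_def inf_commute)
  have c3: "\<forall>x y z. z \<in> ?M x y \<longrightarrow> x \<in> ?M z (id y) \<and> y \<in> ?M (id x) z"
    by (auto simp: nakano_mult_def inf_commute)
  have l1: "\<forall>x. top \<in> ?M x x \<and> x \<in> ?M x x" by (simp add: nm_diag)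
  have l2: "\<forall>x. set_mult ?M (?M x x) (?M x x) = ?M x x"
  proof
    fix x :: 'a
    show "set_mult ?M (?M x x) (?M x x) = ?M x x"
    proof
      show "set_mult ?M (?M x x) (?M x x) \<subseteq> ?M x x"
      proof
        fix z assume "z \<in> set_mult ?M (?M x x) (?M x x)"
        then obtain a b where ab: "x \<le> a" "x \<le> b" "z \<in> ?M a b"
          by (auto simp: set_mult_def nm_diag)
        then have "inf a b = inf z b" by (simp add: nm_iff)
        moreover have "x \<le> inf a b" using ab by simp
        moreover have "inf z b \<le> z" by simp
        ultimately show "z \<in> ?M x x" by (simp add: nm_diag)
      qed
    next
      show "?M x x \<subseteq> set_mult ?M (?M x x) (?M x x)"
      proof
        fix z assume "z \<in> ?M x x"
        moreover have "z \<in> ?M z z" by (simp add: nm_diag)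
        ultimately show "z \<in> set_mult ?M (?M x x) (?M x x)"
          unfolding set_mult_def by blast
      qed
    qed
  qed
  have l3: "\<forall>x y. set_mult ?M {x} (?M x y) \<inter> set_mult ?M (?M x y) {y} \<subseteq> ?M x y"
  proof (intro allI subsetI)
    fix x y w assume "w \<in> set_mult ?M {x} (?M x y) \<inter> set_mult ?M (?M x y) {y}"
    then obtain u v where u: "u \<in> ?M x y" "w \<in> ?M x u" and v: "v \<in> ?M x y" "w \<in> ?M v y"
      by (auto simp: set_mult_def)
    show "w \<in> ?M x y" using u v by (simp add: nm_iff)
  qed
  have l4: "\<forall>x y. \<exists>!z. z \<in> ?M x y \<and> x \<in> ?M z z \<and> y \<in> ?M z z"
  proof (intro allI)
    fix x y :: 'a
    show "\<exists>!z. z \<in> ?M x y \<and> x \<in> ?M z z \<and> y \<in> ?M z z"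
    proof (rule ex1I[of _ "inf x y"])
      show "inf x y \<in> ?M x y \<and> x \<in> ?M (inf x y) (inf x y) \<and> y \<in> ?M (inf x y) (inf x y)"
        by (simp add: nm_iff nm_diag inf_assoc inf_commute inf_left_commute)
    next
      fix z assume "z \<in> ?M x y \<and> x \<in> ?M z z \<and> y \<in> ?M z z"
      then show "z = inf x y"
        by (simp add: nm_iff nm_diag) (metis inf.absorb2)
    qed
  qed
  show ?thesis unfolding L_mosaic_def comm_mosaic_def
    using c1 c2 c3 l1 l2 l3 l4 by blast
qed

end
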